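(* Let $\mathcal V$ be a multivector field on $X$, assume $X$ is invariant, and let $\mathcal M=\{M_p\mid p\in\mathbb P\}$ be a Morse decomposition of $X$ indexed by a finite poset $(\mathbb P,\le)$. If $I\subset\mathbb P$ is convex, then $(M(I^{\le}),M(I^{<}))$ is an index pair for the isolated invariant set $M(I)$.
   Context: $X$ is a finite $T_0$ topological space. For $A\subset X$, $\operatorname{cl}A$ is its closure and $\operatorname{mo}A:=\operatorname{cl}A\setminus A$. $A$ is locally closed if it is the intersection of an open and a closed subset of $X$. $H$ denotes relative singular homology. A multivector is a nonempty locally closed subset of $X$; a multivector field $\mathcal V$ on $X$ is a partition of $X$ into multivectors. For $x\in X$, $[x]$ denotes the element of $\mathcal V$ containing $x$. A multivector $V$ is critical if $H(\operatorname{cl}V,\operatorname{mo}V)\neq0$, regular otherwise. $A\subset X$ is $\mathcal V$-compatible if for every $x\in X$ either $[x]\cap A=\emptyset$ or $[x]\subset A$. Put $\Pi_{\mathcal V}(x):=[x]\cup\operatorname{cl}\{x\}$ and $\Pi_{\mathcal V}(A):=\bigcup_{x\in A}\Pi_{\mathcal V}(x)$. A $\mathbb Z$-interval is $\mathbb Z\cap I$ for a real interval $I$. A solution in $A\subset X$ is a map $\varphi:D\to A$ on a $\mathbb Z$-interval $D$ with $\varphi(i+1)\in\Pi_{\mathcal V}(\varphi(i))$ whenever $i,i+1\in D$; it is full if $D=\mathbb Z$, and a path if $D$ is bounded, its endpoints being $\varphi(\min D)$ and $\varphi(\max D)$. A full solution $\varphi$ is essential if for every $t\in\mathbb Z$ with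 $[\varphi(t)]$ regular, the set $\{s\in\mathbb Z:\varphi(s)\notin[\varphi(t)]\}$ is unbounded below and unbounded above. $\operatorname{Inv}A$ is the set of $x\in A$ such that there is an essential full solution $\varphi$ with image in $A$ and $\varphi(0)=x$; $A$ is invariant if $\operatorname{Inv}A=A$. A closed set $N$ isolates an invariant set $S\subset N$ if (a) every path in $N$ with both endpoints in $S$ has image contained in $S$, and (b) $\Pi_{\mathcal V}(S)\subset N$. An invariant set is an isolated invariant set if some closed set isolates it. For a full solution $\varphi$: $\operatorname{uim}^-\varphi:=\bigcap_{t\le0}\varphi((-\infty,t])$, $\operatorname{uim}^+\varphi:=\bigcap_{t\ge0}\varphi([t,\infty))$; the $\mathcal V$-hull $\langle A\rangle_{\mathcal V}$ is the intersection of all $\mathcal V$-compatible locally closed sets containing $A$; $\alpha(\varphi):=\langle\operatorname{uim}^-\varphi\rangle_{\mathcal V}$, $\omega(\varphi):=\langle\operatorname{uim}^+\varphi\rangle_{\mathcal V}$. For invariant $X$ and a finite poset $(\mathbb P,\le)$, a family $\mathcal M=\{M_p\mid p\in\mathbb P\}$ is a Morse decomposition of $X$ if (i) the $M_p$ are mutually disjoint isolated invariant subsets of $X$, and (ii) for every essential full solution $\varphi$ in $X$ either $\operatorname{im}\varphi\subset M_r$ for some $r\in\mathbb P$, or there exist $p,q\in\mathbb P$ with $q>p$, $\alpha(\varphi)\subset M_q$ and $\omega(\varphi)\subset M_p$. For $A,B\subset X$ the connection set $C(A,B)$ is the set of $x\in X$ for which there is an essential full solution $\varphi$ in $X$ with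 $\varphi(0)=x$, $\alpha(\varphi)\subset A$, $\omega(\varphi)\subset B$. For $I\subset\mathbb P$, $M(I):=\bigcup_{i,j\in I}C(M_i,M_j)$ (an isolated invariant set). $I$ is convex if $a\le b\le c$ with $a,c\in I$ implies $b\in I$; $I^{\le}:=\{a\in\mathbb P:\exists b\in I,\ a\le b\}$ and $I^<:=I^{\le}\setminus I$. An index pair for an isolated invariant set $S$ is a pair $(P_1,P_2)$ of closed subsets of $X$ with $P_2\subset P_1$ such that (IP1) if $x\in P_2$ and $y\in\Pi_{\mathcal V}(x)\cap P_1$ then $y\in P_2$; (IP2) if $x\in P_1$ and $\Pi_{\mathcal V}(x)\setminus P_1\neq\emptyset$ then $x\in P_2$; (IP3) $S=\operatorname{Inv}(P_1\setminus P_2)$. *)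

theory Defs
  imports "HOL-Analysis.Analysis" "HOL-Homology.Homology"
begin

definition mo :: "'a topology \<Rightarrow> 'a set \<Rightarrow> 'a set" where
  "mo X A = (X closure_of A) - A"

definition loc_closed :: "'a topology \<Rightarrow> 'a set \<Rightarrow> bool" where
  "loc_closed X A \<longleftrightarrow> (\<exists>U C. openin X U \<and> closedin X C \<and> A = U \<inter> C)"

definition multivector :: "'a topology \<Rightarrow> 'a set \<Rightarrow> bool" where
  "multivector X A \<longleftrightarrow> A \<noteq> {} \<and> loc_closed X A"

definition multivector_field :: "'a topology \<Rightarrow> 'a set set \<Rightarrow> bool" where
  "multivector_field X V \<longleftrightarrow>
     (\<forall>W\<in>V. multivector X W) \<and> \<Union>V = topspace X \<and>
     (\<forall>W1\<in>V. \<forall>W2\<in>V. W1 \<noteq> W2 \<longrightarrow> W1 \<inter> W2 = {})"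

definition cell :: "'a set set \<Rightarrow> 'a \<Rightarrow> 'a set" where
  "cell V x = \<Union>{W\<in>V. x \<in> W}"

definition critical :: "'a topology \<Rightarrow> 'a set \<Rightarrow> bool" where
  "critical X A \<longleftrightarrow>
     (\<exists>p. \<not> trivial_group (relative_homology_group p (subtopology X (X closure_of A)) (mo X A)))"

definition regular :: "'a topology \<Rightarrow> 'a set \<Rightarrow> bool" where
  "regular X A \<longleftrightarrow> \<not> critical X A"

definition compatible :: "'a topology \<Rightarrow> 'a set set \<Rightarrow> 'a set \<Rightarrow> bool" where
  "compatible X V A \<longleftrightarrow> (\<forall>x\<in>topspace X. cell V x \<inter> A = {} \<or> cell V x \<subseteq> A)"

definition PiV :: "'a topology \<Rightarrow> 'a set set \<Rightarrow> 'a \<Rightarrow> 'a set" where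
  "PiV X V x = cell V x \<union> X closure_of {x}"

definition PiV_set :: "'a topology \<Rightarrow> 'a set set \<Rightarrow> 'a set \<Rightarrow> 'a set" where
  "PiV_set X V A = (\<Union>x\<in>A. PiV X V x)"

definition solution :: "'a topology \<Rightarrow> 'a set set \<Rightarrow> 'a set \<Rightarrow> int set \<Rightarrow> (int \<Rightarrow> 'a) \<Rightarrow> bool" where
  "solution X V A D \<phi> \<longleftrightarrow>
     (\<forall>i\<in>D. \<phi> i \<in> A) \<and> (\<forall>i. i \<in> D \<and> i + 1 \<in> D \<longrightarrow> \<phi> (i + 1) \<in> PiV X V (\<phi> i))"

definition full_solution :: "'a topology \<Rightarrow> 'a set set \<Rightarrow> 'a set \<Rightarrow> (int \<Rightarrow> 'a) \<Rightarrow> bool" where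
  "full_solution X V A \<phi> \<longleftrightarrow> solution X V A UNIV \<phi>"

definition essential :: "'a topology \<Rightarrow> 'a set set \<Rightarrow> (int \<Rightarrow> 'a) \<Rightarrow> bool" where
  "essential X V \<phi> \<longleftrightarrow>
     (\<forall>t. regular X (cell V (\<phi> t)) \<longrightarrow>
        (\<forall>m. \<exists>s. s < m \<and> \<phi> s \<notin> cell V (\<phi> t)) \<and>
        (\<forall>m. \<exists>s. s > m \<and> \<phi> s \<notin> cell V (\<phi> t)))"

definition ess_full_solution :: "'a topology \<Rightarrow> 'a set set \<Rightarrow> 'a set \<Rightarrow> (int \<Rightarrow> 'a) \<Rightarrow> bool" where
  "ess_full_solution X V A \<phi> \<longleftrightarrow> full_solution X V A \<phi> \<and> essential X V \<phi>"

definition Inv :: "'a topology \<Rightarrow> 'a set set \<Rightarrow> 'a set \<Rightarrow> 'a set" where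
  "Inv X V A = {x \<in> A. \<exists>\<phi>. ess_full_solution X V A \<phi> \<and> \<phi> 0 = x}"

definition invariant :: "'a topology \<Rightarrow> 'a set set \<Rightarrow> 'a set \<Rightarrow> bool" where
  "invariant X V A \<longleftrightarrow> Inv X V A = A"

text \<open>Paths: solutions on a bounded nonempty Z-interval {a..b}.\<close>
definition isolates :: "'a topology \<Rightarrow> 'a set set \<Rightarrow> 'a set \<Rightarrow> 'a set \<Rightarrow> bool" where
  "isolates X V N S \<longleftrightarrow> closedin X N \<and> S \<subseteq> N \<and>
     (\<forall>a b \<phi>. a \<le> b \<and> solution X V N {a..b} \<phi> \<and> \<phi> a \<in> S \<and> \<phi> b \<in> S \<longrightarrow> \<phi> ` {a..b} \<subseteq> S) \<and>
     PiV_set X V S \<subseteq> N"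

definition isolated_invariant :: "'a topology \<Rightarrow> 'a set set \<Rightarrow> 'a set \<Rightarrow> bool" where
  "isolated_invariant X V S \<longleftrightarrow> S \<subseteq> topspace X \<and> invariant X V S \<and> (\<exists>N. isolates X V N S)"

definition uim_minus :: "(int \<Rightarrow> 'a) \<Rightarrow> 'a set" where
  "uim_minus \<phi> = (\<Inter>t\<in>{..0}. \<phi> ` {..t})"

definition uim_plus :: "(int \<Rightarrow> 'a) \<Rightarrow> 'a set" where
  "uim_plus \<phi> = (\<Inter>t\<in>{0..}. \<phi> ` {t..})"

definition vhull :: "'a topology \<Rightarrow> 'a set set \<Rightarrow> 'a set \<Rightarrow> 'a set" where
  "vhull X V A = \<Inter>{U. U \<subseteq> topspace X \<and> compatible X V U \<and> loc_closed X U \<and> A \<subseteq> U}"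

definition alpha_lim :: "'a topology \<Rightarrow> 'a set set \<Rightarrow> (int \<Rightarrow> 'a) \<Rightarrow> 'a set" where
  "alpha_lim X V \<phi> = vhull X V (uim_minus \<phi>)"

definition omega_lim :: "'a topology \<Rightarrow> 'a set set \<Rightarrow> (int \<Rightarrow> 'a) \<Rightarrow> 'a set" where
  "omega_lim X V \<phi> = vhull X V (uim_plus \<phi>)"

text \<open>Morse decomposition indexed by a finite poset (P, R), R the order relation (pairs (a,b) with a \<le> b).\<close>
definition morse_decomposition ::
  "'a topology \<Rightarrow> 'a set set \<Rightarrow> 'p set \<Rightarrow> ('p \<times> 'p) set \<Rightarrow> ('p \<Rightarrow> 'a set) \<Rightarrow> bool" where
  "morse_decomposition X V P R M \<longleftrightarrow>
     (\<forall>p\<in>P. \<forall>q\<in>P. p \<noteq> q \<longrightarrow> M p \<inter> M q = {}) \<and>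
     (\<forall>p\<in>P. isolated_invariant X V (M p)) \<and>
     (\<forall>\<phi>. ess_full_solution X V (topspace X) \<phi> \<longrightarrow>
        (\<exists>r\<in>P. range \<phi> \<subseteq> M r) \<or>
        (\<exists>p\<in>P. \<exists>q\<in>P. (p, q) \<in> R \<and> q \<noteq> p \<and> alpha_lim X V \<phi> \<subseteq> M q \<and> omega_lim X V \<phi> \<subseteq> M p))"

definition connection_set :: "'a topology \<Rightarrow> 'a set set \<Rightarrow> 'a set \<Rightarrow> 'a set \<Rightarrow> 'a set" where
  "connection_set X V A B = {x. \<exists>\<phi>. ess_full_solution X V (topspace X) \<phi> \<and> \<phi> 0 = x \<and>
                                   alpha_lim X V \<phi> \<subseteq> A \<and> omega_lim X V \<phi> \<subseteq> B}"

definition MI :: "'a topology \<Rightarrow> 'a set set \<Rightarrow> ('p \<Rightarrow> 'a set) \<Rightarrow> 'p set \<Rightarrow> 'a set" where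
  "MI X V M I = (\<Union>i\<in>I. \<Union>j\<in>I. connection_set X V (M i) (M j))"

definition convex_in :: "'p set \<Rightarrow> ('p \<times> 'p) set \<Rightarrow> 'p set \<Rightarrow> bool" where
  "convex_in P R I \<longleftrightarrow> (\<forall>a\<in>I. \<forall>b\<in>P. \<forall>c\<in>I. (a, b) \<in> R \<and> (b, c) \<in> R \<longrightarrow> b \<in> I)"

definition down_le :: "'p set \<Rightarrow> ('p \<times> 'p) set \<Rightarrow> 'p set \<Rightarrow> 'p set" where
  "down_le P R I = {a\<in>P. \<exists>b\<in>I. (a, b) \<in> R}"

definition down_lt :: "'p set \<Rightarrow> ('p \<times> 'p) set \<Rightarrow> 'p set \<Rightarrow> 'p set" where
  "down_lt P R I = down_le P R I - I"

definition index_pair :: "'a topology \<Rightarrow> 'a set set \<Rightarrow> 'a set \<Rightarrow> 'a set \<Rightarrow> 'a set \<Rightarrow> bool" where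
  "index_pair X V P1 P2 S \<longleftrightarrow>
     closedin X P1 \<and> closedin X P2 \<and> P2 \<subseteq> P1 \<and>
     (\<forall>x\<in>P2. \<forall>y\<in>PiV X V x \<inter> P1. y \<in> P2) \<and>
     (\<forall>x\<in>P1. PiV X V x - P1 \<noteq> {} \<longrightarrow> x \<in> P2) \<and>
     S = Inv X V (P1 - P2)"

end

theory Submission
  imports Defs
begin

lemma uim_minus_char: "uim_minus \<phi> = {y. \<forall>t. \<exists>s\<le>t. \<phi> s = y}"
proof (intro Set.set_eqI iffI)
  fix y assume "y \<in> uim_minus \<phi>"
  hence h: "\<And>t. t \<le> 0 \<Longrightarrow> y \<in> \<phi> ` {..t}" unfolding uim_minus_def by auto
  show "y \<in> {y. \<forall>t. \<exists>s\<le>t. \<phi> s = y}"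
  proof (clarify)
    fix t
    from h[of "min t 0"] obtain s where "s \<le> min t 0" "y = \<phi> s" by auto
    thus "\<exists>s\<le>t. \<phi> s = y" by auto
  qed
next
  fix y assume "y \<in> {y. \<forall>t. \<exists>s\<le>t. \<phi> s = y}"
  thus "y \<in> uim_minus \<phi>" unfolding uim_minus_def by fastforce
qed

lemma uim_plus_char: "uim_plus \<phi> = {y. \<forall>t. \<exists>s\<ge>t. \<phi> s = y}"
proof (intro Set.set_eqI iffI)
  fix y assume "y \<in> uim_plus \<phi>"
  hence h: "\<And>t. t \<ge> 0 \<Longrightarrow> y \<in> \<phi> ` {t..}" unfolding uim_plus_def by auto
  show "y \<in> {y. \<forall>t. \<exists>s\<ge>t. \<phi> s = y}"
  proof (clarify)
    fix t
    from h[of "max t 0"] obtain s where "s \<ge> max t 0" "y = \<phi> s" by auto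
    thus "\<exists>s\<ge>t. \<phi> s = y" by auto
  qed
next
  fix y assume "y \<in> {y. \<forall>t. \<exists>s\<ge>t. \<phi> s = y}"
  thus "y \<in> uim_plus \<phi>" unfolding uim_plus_def by fastforce
qed

lemma uim_minus_range: "uim_minus \<phi> \<subseteq> range \<phi>"
  unfolding uim_minus_char by auto
lemma uim_plus_range: "uim_plus \<phi> \<subseteq> range \<phi>"
  unfolding uim_plus_char by auto

lemma uim_minus_ne:
  assumes "finite (range \<phi>)" shows "uim_minus \<phi> \<noteq> {}"
proof
  assume "uim_minus \<phi> = {}"
  hence "\<forall>y. \<exists>t. \<forall>s\<le>t. \<phi> s \<noteq> y" unfolding uim_minus_char by auto
  then obtain f where f: "\<And>y s. s \<le> f y \<Longrightarrow> \<phi> s \<noteq> y" by metis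
  define t0 where "t0 = Min (f ` range \<phi>)"
  have "t0 \<le> f (\<phi> t0)" unfolding t0_def using assms by (intro Min_le) auto
  thus False using f by blast
qed

lemma uim_plus_ne:
  assumes "finite (range \<phi>)" shows "uim_plus \<phi> \<noteq> {}"
proof
  assume "uim_plus \<phi> = {}"
  hence "\<forall>y. \<exists>t. \<forall>s\<ge>t. \<phi> s \<noteq> y" unfolding uim_plus_char by auto
  then obtain f where f: "\<And>y s. s \<ge> f y \<Longrightarrow> \<phi> s \<noteq> y" by metis
  define t0 where "t0 = Max (f ` range \<phi>)"
  have "t0 \<ge> f (\<phi> t0)" unfolding t0_def using assms by (intro Max_ge) auto
  thus False using f by blast
qed

definition shift :: "int \<Rightarrow> (int \<Rightarrow> 'a) \<Rightarrow> int \<Rightarrow> 'a" where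
  "shift k \<phi> = (\<lambda>s. \<phi> (s + k))"

lemma full_solution_shift:
  "full_solution X V A \<phi> \<Longrightarrow> full_solution X V A (shift k \<phi>)"
  unfolding full_solution_def solution_def shift_def
  by (metis UNIV_I add.commute add.left_commute)

lemma essential_shift:
  assumes "essential X V \<phi>" shows "essential X V (shift k \<phi>)"
  unfolding essential_def
proof (intro allI impI conjI)
  fix t m assume r: "regular X (cell V (shift k \<phi> t))"
  hence r': "regular X (cell V (\<phi> (t + k)))" by (simp add: shift_def)
  from assms r' obtain s where "s < m + k" "\<phi> s \<notin> cell V (\<phi> (t + k))"
    unfolding essential_def by blast
  thus "\<exists>s<m. shift k \<phi> s \<notin> cell V (shift k \<phi> t)"
    by (intro exI[of _ "s - k"]) (simp add: shift_def)
next
  fix t m assume r: "regular X (cell V (shift k \<phi> t))"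
  hence r': "regular X (cell V (\<phi> (t + k)))" by (simp add: shift_def)
  from assms r' obtain s where "s > m + k" "\<phi> s \<notin> cell V (\<phi> (t + k))"
    unfolding essential_def by blast
  thus "\<exists>s>m. shift k \<phi> s \<notin> cell V (shift k \<phi> t)"
    by (intro exI[of _ "s - k"]) (simp add: shift_def)
qed

lemma ess_shift: "ess_full_solution X V A \<phi> \<Longrightarrow> ess_full_solution X V A (shift k \<phi>)"
  unfolding ess_full_solution_def using full_solution_shift essential_shift by blast

lemma uim_minus_shift: "uim_minus (shift k \<phi>) = uim_minus \<phi>"
proof -
  have "(\<forall>t. \<exists>s\<le>t. \<phi> (s + k) = y) \<longleftrightarrow> (\<forall>t. \<exists>s\<le>t. \<phi> s = y)" for y
  proof
    assume h: "\<forall>t. \<exists>s\<le>t. \<phi> (s + k) = y"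
    show "\<forall>t. \<exists>s\<le>t. \<phi> s = y"
    proof
      fix t obtain s where "s \<le> t - k" "\<phi> (s + k) = y" using h by blast
      thus "\<exists>s\<le>t. \<phi> s = y" by (intro exI[of _ "s + k"]) auto
    qed
  next
    assume h: "\<forall>t. \<exists>s\<le>t. \<phi> s = y"
    show "\<forall>t. \<exists>s\<le>t. \<phi> (s + k) = y"
    proof
      fix t obtain s where "s \<le> t + k" "\<phi> s = y" using h by blast
      thus "\<exists>s\<le>t. \<phi> (s + k) = y" by (intro exI[of _ "s - k"]) auto
    qed
  qed
  thus ?thesis unfolding uim_minus_char shift_def by simp
qed

lemma uim_plus_shift: "uim_plus (shift k \<phi>) = uim_plus \<phi>"
proof -
  have "(\<forall>t. \<exists>s\<ge>t. \<phi> (s + k) = y) \<longleftrightarrow> (\<forall>t. \<exists>s\<ge>t. \<phi> s = y)" for y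
  proof
    assume h: "\<forall>t. \<exists>s\<ge>t. \<phi> (s + k) = y"
    show "\<forall>t. \<exists>s\<ge>t. \<phi> s = y"
    proof
      fix t obtain s where "s \<ge> t - k" "\<phi> (s + k) = y" using h by blast
      thus "\<exists>s\<ge>t. \<phi> s = y" by (intro exI[of _ "s + k"]) auto
    qed
  next
    assume h: "\<forall>t. \<exists>s\<ge>t. \<phi> s = y"
    show "\<forall>t. \<exists>s\<ge>t. \<phi> (s + k) = y"
    proof
      fix t obtain s where "s \<ge> t + k" "\<phi> s = y" using h by blast
      thus "\<exists>s\<ge>t. \<phi> (s + k) = y" by (intro exI[of _ "s - k"]) auto
    qed
  qed
  thus ?thesis unfolding uim_plus_char shift_def by simp
qed

lemma alpha_shift: "alpha_lim X V (shift k \<phi>) = alpha_lim X V \<phi>"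
  unfolding alpha_lim_def uim_minus_shift ..
lemma omega_shift: "omega_lim X V (shift k \<phi>) = omega_lim X V \<phi>"
  unfolding omega_lim_def uim_plus_shift ..

definition glue :: "int \<Rightarrow> (int \<Rightarrow> 'a) \<Rightarrow> (int \<Rightarrow> 'a) \<Rightarrow> int \<Rightarrow> 'a" where
  "glue t \<phi> \<psi> = (\<lambda>s. if s \<le> t then \<phi> s else \<psi> s)"

lemma full_solution_glue:
  assumes "full_solution X V A \<phi>" "full_solution X V A \<psi>" "\<psi> (t + 1) \<in> PiV X V (\<phi> t)"
  shows "full_solution X V A (glue t \<phi> \<psi>)"
proof -
  have a: "\<And>i. \<phi> i \<in> A" "\<And>i. \<phi> (i + 1) \<in> PiV X V (\<phi> i)"
       "\<And>i. \<psi> i \<in> A" "\<And>i. \<psi> (i + 1) \<in> PiV X V (\<psi> i)"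
    using assms(1,2) unfolding full_solution_def solution_def by auto
  show ?thesis unfolding full_solution_def solution_def glue_def
  proof (intro conjI ballI allI impI)
    fix i show "(if i \<le> t then \<phi> i else \<psi> i) \<in> A" using a by simp
  next
    fix i
    show "(if i + 1 \<le> t then \<phi> (i + 1) else \<psi> (i + 1)) \<in> PiV X V (if i \<le> t then \<phi> i else \<psi> i)"
    proof (cases "i + 1 \<le> t")
      case True thus ?thesis using a by simp
    next
      case False
      show ?thesis
      proof (cases "i = t")
        case True thus ?thesis using assms(3) by simp
      next
        case False
        with \<open>\<not> i + 1 \<le> t\<close> have "\<not> i \<le> t" by simp
        thus ?thesis using a \<open>\<not> i + 1 \<le> t\<close> by simp
      qed
    qed
  qed
qed

lemma cell_eq:
  assumes "multivector_field X V" "x \<in> cell V y" shows "cell V x = cell V y"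
  using assms unfolding cell_def multivector_field_def by blast

lemma essential_glue:
  assumes mvf: "multivector_field X V" and ef: "essential X V \<phi>" and es: "essential X V \<psi>"
  shows "essential X V (glue t \<phi> \<psi>)"
proof -
  have bk: "\<exists>s<m. \<phi> s \<notin> cell V z" if r: "regular X (cell V z)" for m z
  proof (rule ccontr)
    assume "\<not> (\<exists>s<m. \<phi> s \<notin> cell V z)"
    hence all: "\<forall>s<m. \<phi> s \<in> cell V z" by auto
    hence "\<phi> (m - 1) \<in> cell V z" by auto
    hence ce: "cell V (\<phi> (m - 1)) = cell V z" using cell_eq[OF mvf] by blast
    hence "regular X (cell V (\<phi> (m - 1)))" using r by simp
    with ef obtain s where "s < m" "\<phi> s \<notin> cell V (\<phi> (m - 1))"
      unfolding essential_def by blast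
    thus False using all ce by auto
  qed
  have fw: "\<exists>s>m. \<psi> s \<notin> cell V z" if r: "regular X (cell V z)" for m z
  proof (rule ccontr)
    assume "\<not> (\<exists>s>m. \<psi> s \<notin> cell V z)"
    hence all: "\<forall>s>m. \<psi> s \<in> cell V z" by auto
    hence "\<psi> (m + 1) \<in> cell V z" by auto
    hence ce: "cell V (\<psi> (m + 1)) = cell V z" using cell_eq[OF mvf] by blast
    hence "regular X (cell V (\<psi> (m + 1)))" using r by simp
    with es obtain s where "s > m" "\<psi> s \<notin> cell V (\<psi> (m + 1))"
      unfolding essential_def by blast
    thus False using all ce by auto
  qed
  show ?thesis unfolding essential_def
  proof (intro allI impI conjI)
    fix t0 m assume r: "regular X (cell V (glue t \<phi> \<psi> t0))"
    from bk[OF r, of "min m (t + 1)"] obtain s where "s < min m (t + 1)"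
      "\<phi> s \<notin> cell V (glue t \<phi> \<psi> t0)" by blast
    thus "\<exists>s<m. glue t \<phi> \<psi> s \<notin> cell V (glue t \<phi> \<psi> t0)"
      by (intro exI[of _ s]) (simp add: glue_def)
  next
    fix t0 m assume r: "regular X (cell V (glue t \<phi> \<psi> t0))"
    from fw[OF r, of "max m t"] obtain s where "s > max m t"
      "\<psi> s \<notin> cell V (glue t \<phi> \<psi> t0)" by blast
    thus "\<exists>s>m. glue t \<phi> \<psi> s \<notin> cell V (glue t \<phi> \<psi> t0)"
      by (intro exI[of _ s]) (simp add: glue_def)
  qed
qed

lemma ess_step: "ess_full_solution X V A \<phi> \<Longrightarrow> \<phi> (t + 1) \<in> PiV X V (\<phi> t)"
  unfolding ess_full_solution_def full_solution_def solution_def by auto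

lemma ess_glue:
  assumes "multivector_field X V" "ess_full_solution X V A \<phi>" "ess_full_solution X V A \<psi>"
    "\<psi> (t + 1) \<in> PiV X V (\<phi> t)"
  shows "ess_full_solution X V A (glue t \<phi> \<psi>)"
  using assms full_solution_glue essential_glue unfolding ess_full_solution_def by blast

lemma uim_minus_glue: "uim_minus (glue t \<phi> \<psi>) = uim_minus \<phi>"
proof -
  have "(\<forall>t'. \<exists>s\<le>t'. glue t \<phi> \<psi> s = y) \<longleftrightarrow> (\<forall>t'. \<exists>s\<le>t'. \<phi> s = y)" for y
  proof
    assume h: "\<forall>t'. \<exists>s\<le>t'. glue t \<phi> \<psi> s = y"
    show "\<forall>t'. \<exists>s\<le>t'. \<phi> s = y"
    proof
      fix t' obtain s where "s \<le> min t' t" "glue t \<phi> \<psi> s = y" using h by blast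
      thus "\<exists>s\<le>t'. \<phi> s = y" by (intro exI[of _ s]) (auto simp: glue_def)
    qed
  next
    assume h: "\<forall>t'. \<exists>s\<le>t'. \<phi> s = y"
    show "\<forall>t'. \<exists>s\<le>t'. glue t \<phi> \<psi> s = y"
    proof
      fix t' obtain s where "s \<le> min t' t" "\<phi> s = y" using h by blast
      thus "\<exists>s\<le>t'. glue t \<phi> \<psi> s = y" by (intro exI[of _ s]) (auto simp: glue_def)
    qed
  qed
  thus ?thesis unfolding uim_minus_char by simp
qed

lemma uim_plus_glue: "uim_plus (glue t \<phi> \<psi>) = uim_plus \<psi>"
proof -
  have "(\<forall>t'. \<exists>s\<ge>t'. glue t \<phi> \<psi> s = y) \<longleftrightarrow> (\<forall>t'. \<exists>s\<ge>t'. \<psi> s = y)" for y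
  proof
    assume h: "\<forall>t'. \<exists>s\<ge>t'. glue t \<phi> \<psi> s = y"
    show "\<forall>t'. \<exists>s\<ge>t'. \<psi> s = y"
    proof
      fix t' obtain s where "s \<ge> max t' (t + 1)" "glue t \<phi> \<psi> s = y" using h by blast
      thus "\<exists>s\<ge>t'. \<psi> s = y" by (intro exI[of _ s]) (auto simp: glue_def)
    qed
  next
    assume h: "\<forall>t'. \<exists>s\<ge>t'. \<psi> s = y"
    show "\<forall>t'. \<exists>s\<ge>t'. glue t \<phi> \<psi> s = y"
    proof
      fix t' obtain s where "s \<ge> max t' (t + 1)" "\<psi> s = y" using h by blast
      thus "\<exists>s\<ge>t'. glue t \<phi> \<psi> s = y" by (intro exI[of _ s]) (auto simp: glue_def)
    qed
  qed
  thus ?thesis unfolding uim_plus_char by simp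
qed

lemma alpha_glue: "alpha_lim X V (glue t \<phi> \<psi>) = alpha_lim X V \<phi>"
  unfolding alpha_lim_def uim_minus_glue ..
lemma omega_glue: "omega_lim X V (glue t \<phi> \<psi>) = omega_lim X V \<psi>"
  unfolding omega_lim_def uim_plus_glue ..

lemma isolates_3:
  assumes "isolates X V N S" "x \<in> S" "z \<in> S" "y \<in> PiV X V x" "z \<in> PiV X V y"
  shows "y \<in> S"
proof -
  have SN: "S \<subseteq> N" and PN: "PiV_set X V S \<subseteq> N"
    and iso: "\<And>a b \<phi>. a \<le> b \<Longrightarrow> solution X V N {a..b} \<phi> \<Longrightarrow> \<phi> a \<in> S \<Longrightarrow> \<phi> b \<in> S \<Longrightarrow> \<phi> ` {a..b} \<subseteq> S"
    using assms(1) unfolding isolates_def by blast+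
  have yN: "y \<in> N" using PN assms(2,4) unfolding PiV_set_def by blast
  define \<phi> where "\<phi> = (\<lambda>i::int. if i = 0 then x else if i = 1 then y else z)"
  have "solution X V N {0..2} \<phi>"
    unfolding solution_def
  proof (intro conjI ballI allI impI)
    fix i :: int assume "i \<in> {0..2}"
    thus "\<phi> i \<in> N" using SN assms(2,3) yN unfolding \<phi>_def by auto
  next
    fix i :: int assume "i \<in> {0..2} \<and> i + 1 \<in> {0..2}"
    hence "i = 0 \<or> i = 1" by auto
    thus "\<phi> (i + 1) \<in> PiV X V (\<phi> i)" using assms(4,5) unfolding \<phi>_def by auto
  qed
  moreover have "\<phi> 0 \<in> S" "\<phi> 2 \<in> S" using assms(2,3) unfolding \<phi>_def by simp_all
  ultimately have "\<phi> ` {0..2} \<subseteq> S" using iso[of 0 2 \<phi>] by simp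
  moreover have "(1::int) \<in> {0..2}" by simp
  ultimately have "\<phi> 1 \<in> S" by blast
  thus ?thesis unfolding \<phi>_def by simp
qed

lemma iso_compat:
  assumes "isolated_invariant X V S" "multivector_field X V"
  shows "compatible X V S"
proof -
  obtain N where N: "isolates X V N S" using assms(1) unfolding isolated_invariant_def by blast
  show ?thesis unfolding compatible_def
  proof (intro ballI)
    fix x assume "x \<in> topspace X"
    show "cell V x \<inter> S = {} \<or> cell V x \<subseteq> S"
    proof (cases "cell V x \<inter> S = {}")
      case False
      then obtain z where z: "z \<in> cell V x" "z \<in> S" by blast
      have "cell V x \<subseteq> S"
      proof
        fix y assume y: "y \<in> cell V x"
        have "cell V z = cell V x" "cell V y = cell V x" using cell_eq[OF assms(2)] z y by auto
        hence "y \<in> PiV X V z" "z \<in> PiV X V y" using y z unfolding PiV_def by auto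
        thus "y \<in> S" using isolates_3[OF N z(2) z(2)] by blast
      qed
      thus ?thesis by blast
    qed simp
  qed
qed


lemma closure_fin:
  assumes "finite T" shows "X closure_of T = (\<Union>t\<in>T. X closure_of {t})"
  using closure_of_Union[of "(\<lambda>t. {t}) ` T" X] assms by simp
lemma sub_vhull: "A \<subseteq> vhull X V A"
  unfolding vhull_def by (rule Inter_greatest) simp
lemma vhull_sub: "S \<subseteq> topspace X \<Longrightarrow> compatible X V S \<Longrightarrow> loc_closed X S \<Longrightarrow> A \<subseteq> S \<Longrightarrow> vhull X V A \<subseteq> S"
  unfolding vhull_def by (rule Inter_lower) simp
lemma iso_lc:
  assumes "isolated_invariant X V S" "finite (topspace X)"
  shows "loc_closed X S"
proof -
  obtain N where N: "isolates X V N S" using assms(1) unfolding isolated_invariant_def by blast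
  have St: "S \<subseteq> topspace X" using assms(1) unfolding isolated_invariant_def by blast
  have conv: "m \<in> S" if "a \<in> S" "a' \<in> S" "m \<in> X closure_of {a'}" "a \<in> X closure_of {m}" for a a' m
    using isolates_3[OF N that(2) that(1)] that(3,4) unfolding PiV_def by blast
  define C where "C = X closure_of S"
  define D where "D = C - S"
  define U where "U = topspace X - X closure_of D"
  have "openin X U" unfolding U_def by (intro openin_diff) auto
  moreover have "closedin X C" unfolding C_def by simp
  moreover have "S = U \<inter> C"
  proof (rule equalityI)
    have finS: "finite S" by (rule finite_subset[OF St assms(2)])
    have Dt: "D \<subseteq> topspace X" unfolding D_def C_def using closure_of_subset_topspace[of X S] by auto
    have finD: "finite D" by (rule finite_subset[OF Dt assms(2)])
    show "S \<subseteq> U \<inter> C"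
    proof
      fix a assume a: "a \<in> S"
      have "a \<in> C" using closure_of_subset[OF St] a unfolding C_def by blast
      moreover have "a \<notin> X closure_of D"
      proof
        assume "a \<in> X closure_of D"
        then obtain m where m: "m \<in> D" "a \<in> X closure_of {m}" using closure_fin[OF finD] by blast
        then have "m \<in> X closure_of S" unfolding D_def C_def by blast
        then obtain a' where a': "a' \<in> S" "m \<in> X closure_of {a'}" using closure_fin[OF finS] by blast
        have "m \<in> S" using conv[OF a a'(1) a'(2) m(2)] .
        thus False using m(1) unfolding D_def by blast
      qed
      ultimately show "a \<in> U \<inter> C" unfolding U_def using St a by blast
    qed
    show "U \<inter> C \<subseteq> S"
    proof
      fix y assume y: "y \<in> U \<inter> C"
      show "y \<in> S"
      proof (rule ccontr)
        assume "y \<notin> S"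
        hence "y \<in> D" using y unfolding D_def by blast
        hence "y \<in> X closure_of D" using closure_of_subset[OF Dt] by blast
        thus False using y unfolding U_def by blast
      qed
    qed
  qed
  ultimately show ?thesis unfolding loc_closed_def by blast
qed


lemma ess_mono: "A \<subseteq> B \<Longrightarrow> ess_full_solution X V A \<phi> \<Longrightarrow> ess_full_solution X V B \<phi>"
  unfolding ess_full_solution_def full_solution_def solution_def by auto

lemma ess_range: "ess_full_solution X V A \<phi> \<Longrightarrow> range \<phi> \<subseteq> A"
  unfolding ess_full_solution_def full_solution_def solution_def by auto

lemma PiV_top:
  assumes "multivector_field X V" shows "PiV X V x \<subseteq> topspace X"
proof -
  have u: "\<Union>V = topspace X" using assms by (simp add: multivector_field_def)
  have "cell V x \<subseteq> \<Union>V" unfolding cell_def by auto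
  hence "cell V x \<subseteq> topspace X" by (simp only: u)
  thus ?thesis unfolding PiV_def using closure_of_subset_topspace[of X "{x}"] by (rule Un_least)
qed


locale ctx =
  fixes X :: "'a topology" and V :: "'a set set" and P :: "'p set"
    and R :: "('p \<times> 'p) set" and M :: "'p \<Rightarrow> 'a set"
  assumes fin: "finite (topspace X)" and mvf: "multivector_field X V"
    and invX: "invariant X V (topspace X)" and po: "partial_order_on P R"
    and md: "morse_decomposition X V P R M"
begin

lemma Rrefl: "p \<in> P \<Longrightarrow> (p, p) \<in> R"
  using partial_order_onD(1)[OF po] unfolding refl_on_def by blast

lemma Rtrans: "(a, b) \<in> R \<Longrightarrow> (b, c) \<in> R \<Longrightarrow> (a, c) \<in> R"
  using partial_order_onD(2)[OF po] by (meson transD)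

lemma Rsub: "(a, b) \<in> R \<Longrightarrow> a \<in> P \<and> b \<in> P"
  using partial_order_onD(4)[OF po] by blast

lemma Mdisj: "p \<in> P \<Longrightarrow> q \<in> P \<Longrightarrow> p \<noteq> q \<Longrightarrow> M p \<inter> M q = {}"
  using md unfolding morse_decomposition_def by blast

lemma Meq: "a \<in> P \<Longrightarrow> r \<in> P \<Longrightarrow> u \<in> M a \<Longrightarrow> u \<in> M r \<Longrightarrow> a = r"
  using Mdisj by blast

lemma Miso: "p \<in> P \<Longrightarrow> isolated_invariant X V (M p)"
  using md unfolding morse_decomposition_def by blast

lemma Mmorse: "ess_full_solution X V (topspace X) \<phi> \<Longrightarrow>
   (\<exists>r\<in>P. range \<phi> \<subseteq> M r) \<or>
   (\<exists>p\<in>P. \<exists>q\<in>P. (p, q) \<in> R \<and> q \<noteq> p \<and> alpha_lim X V \<phi> \<subseteq> M q \<and> omega_lim X V \<phi> \<subseteq> M p)"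
  using md unfolding morse_decomposition_def by blast

lemma Mtop: "p \<in> P \<Longrightarrow> M p \<subseteq> topspace X"
  using Miso unfolding isolated_invariant_def by blast

lemma vhull_M: "p \<in> P \<Longrightarrow> A \<subseteq> M p \<Longrightarrow> vhull X V A \<subseteq> M p"
  using vhull_sub[OF Mtop iso_compat[OF Miso mvf] iso_lc[OF Miso fin]] by blast

lemma finrange: "ess_full_solution X V (topspace X) \<phi> \<Longrightarrow> finite (range \<phi>)"
  using ess_range fin finite_subset by metis

lemma L_alpha: "ess_full_solution X V (topspace X) \<phi> \<Longrightarrow> \<exists>q\<in>P. alpha_lim X V \<phi> \<subseteq> M q"
proof -
  assume e: "ess_full_solution X V (topspace X) \<phi>"
  from Mmorse[OF e] show ?thesis
  proof
    assume "\<exists>r\<in>P. range \<phi> \<subseteq> M r"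
    then obtain r where "r \<in> P" "range \<phi> \<subseteq> M r" by blast
    hence "alpha_lim X V \<phi> \<subseteq> M r" unfolding alpha_lim_def
      using vhull_M uim_minus_range by (metis subset_trans)
    thus ?thesis using \<open>r \<in> P\<close> by blast
  qed blast
qed

lemma L_omega: "ess_full_solution X V (topspace X) \<phi> \<Longrightarrow> \<exists>q\<in>P. omega_lim X V \<phi> \<subseteq> M q"
proof -
  assume e: "ess_full_solution X V (topspace X) \<phi>"
  from Mmorse[OF e] show ?thesis
  proof
    assume "\<exists>r\<in>P. range \<phi> \<subseteq> M r"
    then obtain r where "r \<in> P" "range \<phi> \<subseteq> M r" by blast
    hence "omega_lim X V \<phi> \<subseteq> M r" unfolding omega_lim_def
      using vhull_M uim_plus_range by (metis subset_trans)
    thus ?thesis using \<open>r \<in> P\<close> by blast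
  qed blast
qed

lemma L_order:
  assumes e: "ess_full_solution X V (topspace X) \<phi>" and ab: "a \<in> P" "b \<in> P"
    and al: "alpha_lim X V \<phi> \<subseteq> M a" and om: "omega_lim X V \<phi> \<subseteq> M b"
  shows "(b, a) \<in> R"
proof -
  obtain u where u: "u \<in> uim_minus \<phi>" using uim_minus_ne[OF finrange[OF e]] by blast
  obtain w where w: "w \<in> uim_plus \<phi>" using uim_plus_ne[OF finrange[OF e]] by blast
  have s1: "uim_minus \<phi> \<subseteq> alpha_lim X V \<phi>" unfolding alpha_lim_def by (rule sub_vhull)
  have s2: "uim_plus \<phi> \<subseteq> omega_lim X V \<phi>" unfolding omega_lim_def by (rule sub_vhull)
  have ua: "u \<in> M a" using subset_trans[OF s1 al] u by (rule subsetD)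
  have wb: "w \<in> M b" using subset_trans[OF s2 om] w by (rule subsetD)
  have ur: "u \<in> range \<phi>" using uim_minus_range u by (rule subsetD)
  have wr: "w \<in> range \<phi>" using uim_plus_range w by (rule subsetD)
  from Mmorse[OF e] show ?thesis
  proof
    assume "\<exists>r\<in>P. range \<phi> \<subseteq> M r"
    then obtain r where r: "r \<in> P" "range \<phi> \<subseteq> M r" by blast
    have "a = r" using Meq[OF ab(1) r(1) ua] ur r(2) by (simp add: subsetD)
    moreover have "b = r" using Meq[OF ab(2) r(1) wb] wr r(2) by (simp add: subsetD)
    ultimately show ?thesis using Rrefl r(1) by simp
  next
    assume "\<exists>p\<in>P. \<exists>q\<in>P. (p, q) \<in> R \<and> q \<noteq> p \<and> alpha_lim X V \<phi> \<subseteq> M q \<and> omega_lim X V \<phi> \<subseteq> M p"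
    then obtain p q where pq: "p \<in> P" "q \<in> P" "(p, q) \<in> R" "alpha_lim X V \<phi> \<subseteq> M q" "omega_lim X V \<phi> \<subseteq> M p" by blast
    have "u \<in> M q" using subset_trans[OF s1 pq(4)] u by (rule subsetD)
    hence "a = q" using Meq[OF ab(1) pq(2) ua] by simp
    moreover have "w \<in> M p" using subset_trans[OF s2 pq(5)] w by (rule subsetD)
    hence "b = p" using Meq[OF ab(2) pq(1) wb] by simp
    ultimately show ?thesis using pq(3) by simp
  qed
qed

lemma L_inv_Mq:
  assumes q: "q \<in> P" and y: "y \<in> M q"
  shows "y \<in> connection_set X V (M q) (M q)"
proof -
  have "Inv X V (M q) = M q" using Miso[OF q] unfolding isolated_invariant_def invariant_def by blast
  with y obtain \<phi> where e: "ess_full_solution X V (M q) \<phi>" "\<phi> 0 = y" unfolding Inv_def by blast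
  have e2: "ess_full_solution X V (topspace X) \<phi>" using ess_mono[OF Mtop[OF q] e(1)] .
  have rg: "range \<phi> \<subseteq> M q" using ess_range[OF e(1)] .
  have "alpha_lim X V \<phi> \<subseteq> M q" unfolding alpha_lim_def
    using vhull_M[OF q] uim_minus_range rg by (metis subset_trans)
  moreover have "omega_lim X V \<phi> \<subseteq> M q" unfolding omega_lim_def
    using vhull_M[OF q] uim_plus_range rg by (metis subset_trans)
  ultimately show ?thesis unfolding connection_set_def using e2 e(2) by blast
qed

lemma MI_iff: "x \<in> MI X V M J \<longleftrightarrow> (\<exists>i\<in>J. \<exists>j\<in>J. \<exists>\<phi>. ess_full_solution X V (topspace X) \<phi> \<and> \<phi> 0 = x
    \<and> alpha_lim X V \<phi> \<subseteq> M i \<and> omega_lim X V \<phi> \<subseteq> M j)"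
  unfolding MI_def connection_set_def by blast

lemma MI_top: "MI X V M J \<subseteq> topspace X"
  unfolding MI_def connection_set_def using ess_range by blast

lemma MI_mono: "J \<subseteq> J' \<Longrightarrow> MI X V M J \<subseteq> MI X V M J'"
  unfolding MI_def by blast

lemma L_forward:
  assumes J: "J \<subseteq> P" and dc: "\<forall>a\<in>P. \<forall>b\<in>J. (a, b) \<in> R \<longrightarrow> a \<in> J"
    and x: "x \<in> MI X V M J" and y: "y \<in> PiV X V x"
  shows "y \<in> MI X V M J"
proof -
  obtain i j \<phi> where ij: "i \<in> J" "j \<in> J" and e: "ess_full_solution X V (topspace X) \<phi>"
    and \<phi>0: "\<phi> 0 = x" and al: "alpha_lim X V \<phi> \<subseteq> M i"
    using x unfolding MI_iff by blast
  have yt: "y \<in> topspace X" using y PiV_top[OF mvf] by blast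
  with invX obtain \<psi> where e\<psi>: "ess_full_solution X V (topspace X) \<psi>" and \<psi>0: "\<psi> 0 = y"
    unfolding invariant_def Inv_def by blast
  define \<psi>' where "\<psi>' = shift (-1) \<psi>"
  have e\<psi>': "ess_full_solution X V (topspace X) \<psi>'" unfolding \<psi>'_def using ess_shift[OF e\<psi>] .
  have \<psi>'1: "\<psi>' (0 + 1) = y" unfolding \<psi>'_def shift_def using \<psi>0 by simp
  define ch where "ch = glue 0 \<phi> \<psi>'"
  have ech: "ess_full_solution X V (topspace X) ch" unfolding ch_def
    using ess_glue[OF mvf e e\<psi>'] \<psi>'1 \<phi>0 y by simp
  have alch: "alpha_lim X V ch \<subseteq> M i" unfolding ch_def alpha_glue using al .
  obtain k where k: "k \<in> P" "omega_lim X V \<psi> \<subseteq> M k" using L_omega[OF e\<psi>] by blast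
  have omch: "omega_lim X V ch \<subseteq> M k" unfolding ch_def omega_glue \<psi>'_def omega_shift using k(2) .
  have "(k, i) \<in> R" using L_order[OF ech _ k(1) alch omch] ij J by blast
  hence kJ: "k \<in> J" using dc k(1) ij(1) by blast
  have "shift 1 ch 0 = y" unfolding ch_def glue_def shift_def \<psi>'_def using \<psi>0 by simp
  moreover have "ess_full_solution X V (topspace X) (shift 1 ch)" using ess_shift[OF ech] .
  moreover have "alpha_lim X V (shift 1 ch) \<subseteq> M i" unfolding alpha_shift using alch .
  moreover have "omega_lim X V (shift 1 ch) \<subseteq> M k" unfolding omega_shift using omch .
  ultimately show ?thesis unfolding MI_iff using ij(1) kJ by blast
qed

lemma L_closed:
  assumes J: "J \<subseteq> P" and dc: "\<forall>a\<in>P. \<forall>b\<in>J. (a, b) \<in> R \<longrightarrow> a \<in> J"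
  shows "closedin X (MI X V M J)"
proof -
  have fT: "finite (MI X V M J)" using finite_subset[OF MI_top fin] .
  have "X closure_of (MI X V M J) \<subseteq> MI X V M J"
  proof
    fix y assume "y \<in> X closure_of (MI X V M J)"
    then obtain x where x: "x \<in> MI X V M J" "y \<in> X closure_of {x}" using closure_fin[OF fT] by blast
    hence "y \<in> PiV X V x" unfolding PiV_def by blast
    thus "y \<in> MI X V M J" using L_forward[OF J dc x(1)] by blast
  qed
  thus ?thesis using closure_of_subset_eq MI_top by blast
qed

end


theorem theorem7p7:
  fixes X :: "'a topology" and V :: "'a set set"
    and P :: "'p set" and R :: "('p \<times> 'p) set" and M :: "'p \<Rightarrow> 'a set" and I :: "'p set"
  assumes "finite (topspace X)" and "t0_space X"
    and "multivector_field X V"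
    and "invariant X V (topspace X)"
    and "finite P" and "partial_order_on P R"
    and "morse_decomposition X V P R M"
    and "I \<subseteq> P" and "convex_in P R I"
  shows "index_pair X V (MI X V M (down_le P R I)) (MI X V M (down_lt P R I)) (MI X V M I)"
proof -
  interpret ctx X V P R M using assms(1,3,4,6,7) by unfold_locales
  define Ile where "Ile = down_le P R I"
  define Ilt where "Ilt = down_lt P R I"
  have Ile_P: "Ile \<subseteq> P" unfolding Ile_def down_le_def by blast
  have Ilt_P: "Ilt \<subseteq> P" unfolding Ilt_def down_lt_def down_le_def by blast
  have I_Ile: "I \<subseteq> Ile" unfolding Ile_def down_le_def using assms(8) Rrefl by blast
  have Ilt_Ile: "Ilt \<subseteq> Ile" unfolding Ilt_def Ile_def down_lt_def by blast
  have dc_le: "\<forall>a\<in>P. \<forall>b\<in>Ile. (a, b) \<in> R \<longrightarrow> a \<in> Ile"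
    unfolding Ile_def down_le_def using Rtrans by blast
  have dc_lt: "\<forall>a\<in>P. \<forall>b\<in>Ilt. (a, b) \<in> R \<longrightarrow> a \<in> Ilt"
  proof (intro ballI impI)
    fix a b assume a: "a \<in> P" and b: "b \<in> Ilt" and ab: "(a, b) \<in> R"
    from b obtain c where c: "c \<in> I" "(b, c) \<in> R" "b \<notin> I" "b \<in> P"
      unfolding Ilt_def down_lt_def down_le_def by blast
    have "(a, c) \<in> R" using Rtrans[OF ab c(2)] .
    hence "a \<in> Ile" unfolding Ile_def down_le_def using a c(1) by blast
    moreover have "a \<notin> I"
    proof
      assume "a \<in> I"
      hence "b \<in> I" using assms(9) c ab unfolding convex_in_def by blast
      thus False using c by blast
    qed
    ultimately show "a \<in> Ilt" unfolding Ilt_def down_lt_def Ile_def by blast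
  qed
  have c1: "closedin X (MI X V M Ile)" by (rule L_closed[OF Ile_P dc_le])
  have c2: "closedin X (MI X V M Ilt)" by (rule L_closed[OF Ilt_P dc_lt])
  have sub: "MI X V M Ilt \<subseteq> MI X V M Ile" by (rule MI_mono[OF Ilt_Ile])
  have ip1: "\<forall>x\<in>MI X V M Ilt. \<forall>y\<in>PiV X V x \<inter> MI X V M Ile. y \<in> MI X V M Ilt"
    using L_forward[OF Ilt_P dc_lt] by blast
  have ip2: "\<forall>x\<in>MI X V M Ile. PiV X V x - MI X V M Ile \<noteq> {} \<longrightarrow> x \<in> MI X V M Ilt"
    using L_forward[OF Ile_P dc_le] by blast
  have K: "q \<in> I" if yy: "y \<in> MI X V M Ile" "y \<notin> MI X V M Ilt" "q \<in> P" "y \<in> M q" for y q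
  proof -
    have yc: "y \<in> connection_set X V (M q) (M q)" using L_inv_Mq[OF yy(3,4)] .
    then obtain \<psi> where e\<psi>: "ess_full_solution X V (topspace X) \<psi>" and \<psi>0: "\<psi> 0 = y"
      and om\<psi>: "omega_lim X V \<psi> \<subseteq> M q"
      unfolding connection_set_def by blast
    obtain a' \<chi>0 where a': "a' \<in> Ile" and e0: "ess_full_solution X V (topspace X) \<chi>0"
      and \<chi>00: "\<chi>0 0 = y" and al0: "alpha_lim X V \<chi>0 \<subseteq> M a'"
      using yy(1) unfolding MI_iff by blast
    have st: "\<psi> (0 + 1) \<in> PiV X V (\<chi>0 0)" using ess_step[OF e\<psi>, of 0] \<psi>0 \<chi>00 by simp
    define ch where "ch = glue 0 \<chi>0 \<psi>"
    have ech: "ess_full_solution X V (topspace X) ch" unfolding ch_def by (rule ess_glue[OF mvf e0 e\<psi> st])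
    have alc: "alpha_lim X V ch \<subseteq> M a'" unfolding ch_def alpha_glue by (rule al0)
    have omc: "omega_lim X V ch \<subseteq> M q" unfolding ch_def omega_glue by (rule om\<psi>)
    have a'P: "a' \<in> P" using a' Ile_P by blast
    have qa: "(q, a') \<in> R" by (rule L_order[OF ech a'P yy(3) alc omc])
    from a' obtain c where c: "c \<in> I" "(a', c) \<in> R" unfolding Ile_def down_le_def by blast
    have "(q, c) \<in> R" using Rtrans[OF qa c(2)] .
    hence qIle: "q \<in> Ile" unfolding Ile_def down_le_def using yy(3) c(1) by blast
    show "q \<in> I"
    proof (rule ccontr)
      assume "q \<notin> I"
      hence "q \<in> Ilt" using qIle unfolding Ilt_def down_lt_def Ile_def by blast
      hence "y \<in> MI X V M Ilt" using yc unfolding MI_def by blast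
      thus False using yy(2) by blast
    qed
  qed
  have inv_eq: "MI X V M I = Inv X V (MI X V M Ile - MI X V M Ilt)"
  proof (rule equalityI)
    show "MI X V M I \<subseteq> Inv X V (MI X V M Ile - MI X V M Ilt)"
    proof
      fix x assume "x \<in> MI X V M I"
      then obtain i j \<phi> where ij: "i \<in> I" "j \<in> I" and e: "ess_full_solution X V (topspace X) \<phi>"
        and \<phi>0: "\<phi> 0 = x" and al: "alpha_lim X V \<phi> \<subseteq> M i" and om: "omega_lim X V \<phi> \<subseteq> M j"
        unfolding MI_iff by blast
      have all: "\<phi> t \<in> MI X V M Ile - MI X V M Ilt" for t
      proof -
        define \<phi>' where "\<phi>' = shift t \<phi>"
        have e': "ess_full_solution X V (topspace X) \<phi>'" unfolding \<phi>'_def by (rule ess_shift[OF e])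
        have \<phi>'0: "\<phi>' 0 = \<phi> t" unfolding \<phi>'_def shift_def by simp
        have al': "alpha_lim X V \<phi>' \<subseteq> M i" unfolding \<phi>'_def alpha_shift by (rule al)
        have om': "omega_lim X V \<phi>' \<subseteq> M j" unfolding \<phi>'_def omega_shift by (rule om)
        have "\<phi> t \<in> MI X V M I" unfolding MI_iff using ij e' \<phi>'0 al' om' by blast
        hence in1: "\<phi> t \<in> MI X V M Ile" using MI_mono[OF I_Ile] by blast
        have "\<phi> t \<notin> MI X V M Ilt"
        proof
          assume "\<phi> t \<in> MI X V M Ilt"
          then obtain a b \<psi> where ab: "a \<in> Ilt" and e\<psi>: "ess_full_solution X V (topspace X) \<psi>"
            and \<psi>0: "\<psi> 0 = \<phi> t" and al\<psi>: "alpha_lim X V \<psi> \<subseteq> M a"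
            unfolding MI_iff by blast
          have st: "\<phi>' (0 + 1) \<in> PiV X V (\<psi> 0)" using ess_step[OF e', of 0] \<phi>'0 \<psi>0 by simp
          define ch where "ch = glue 0 \<psi> \<phi>'"
          have ech: "ess_full_solution X V (topspace X) ch" unfolding ch_def by (rule ess_glue[OF mvf e\<psi> e' st])
          have alc: "alpha_lim X V ch \<subseteq> M a" unfolding ch_def alpha_glue by (rule al\<psi>)
          have omc: "omega_lim X V ch \<subseteq> M j" unfolding ch_def omega_glue by (rule om')
          have aP: "a \<in> P" using ab Ilt_P by blast
          have jP: "j \<in> P" using ij assms(8) by blast
          have ja: "(j, a) \<in> R" by (rule L_order[OF ech aP jP alc omc])
          from ab obtain c where c: "c \<in> I" "(a, c) \<in> R" "a \<notin> I"
            unfolding Ilt_def down_lt_def down_le_def by blast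
          have "a \<in> I" using assms(9) ij(2) aP c(1) ja c(2) unfolding convex_in_def by blast
          thus False using c(3) by blast
        qed
        with in1 show ?thesis by blast
      qed
      have "ess_full_solution X V (MI X V M Ile - MI X V M Ilt) \<phi>"
        using e all unfolding ess_full_solution_def full_solution_def solution_def by blast
      thus "x \<in> Inv X V (MI X V M Ile - MI X V M Ilt)" unfolding Inv_def using all[of 0] \<phi>0 by blast
    qed
  next
    show "Inv X V (MI X V M Ile - MI X V M Ilt) \<subseteq> MI X V M I"
    proof
      fix x assume "x \<in> Inv X V (MI X V M Ile - MI X V M Ilt)"
      then obtain \<phi> where e1: "ess_full_solution X V (MI X V M Ile - MI X V M Ilt) \<phi>" and \<phi>0: "\<phi> 0 = x"
        unfolding Inv_def by blast
      have tp: "MI X V M Ile - MI X V M Ilt \<subseteq> topspace X" using MI_top by blast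
      have e: "ess_full_solution X V (topspace X) \<phi>" by (rule ess_mono[OF tp e1])
      have rg: "range \<phi> \<subseteq> MI X V M Ile - MI X V M Ilt" by (rule ess_range[OF e1])
      obtain q where q: "q \<in> P" "alpha_lim X V \<phi> \<subseteq> M q" using L_alpha[OF e] by blast
      obtain p where p: "p \<in> P" "omega_lim X V \<phi> \<subseteq> M p" using L_omega[OF e] by blast
      obtain u where u: "u \<in> uim_minus \<phi>" using uim_minus_ne[OF finrange[OF e]] by blast
      obtain w where w: "w \<in> uim_plus \<phi>" using uim_plus_ne[OF finrange[OF e]] by blast
      have s1: "uim_minus \<phi> \<subseteq> alpha_lim X V \<phi>" unfolding alpha_lim_def by (rule sub_vhull)
      have s2: "uim_plus \<phi> \<subseteq> omega_lim X V \<phi>" unfolding omega_lim_def by (rule sub_vhull)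
      have uq: "u \<in> M q" using subset_trans[OF s1 q(2)] u by (rule subsetD)
      have wp: "w \<in> M p" using subset_trans[OF s2 p(2)] w by (rule subsetD)
      have ur: "u \<in> MI X V M Ile - MI X V M Ilt" using subset_trans[OF uim_minus_range rg] u by (rule subsetD)
      have wr: "w \<in> MI X V M Ile - MI X V M Ilt" using subset_trans[OF uim_plus_range rg] w by (rule subsetD)
      have qI: "q \<in> I" using K[of u q] ur q(1) uq by blast
      have pI: "p \<in> I" using K[of w p] wr p(1) wp by blast
      show "x \<in> MI X V M I" unfolding MI_iff using qI pI e \<phi>0 q(2) p(2) by blast
    qed
  qed
  show ?thesis unfolding Ile_def[symmetric] Ilt_def[symmetric] index_pair_def
    using c1 c2 sub ip1 ip2 inv_eq by blast
qed


end
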